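(* There exist constants $c,C>0$ such that for all integers $n\ge2$ and $k\in\mathbb{N}$ with $k\le n^{1/4}$, and all $z\in\mathbb{Z}^2$ with $\|z\|\ge5\sqrt n$, $$\Pr\big[R(n)\cap Q(z,k)\neq\emptyset\big]\le\frac{C}{\log n}\exp\Big(-c\frac{\|z\|^2}{n}\Big).$$
   Context: $S$ is simple symmetric random walk on $\mathbb{Z}^2$ started at $S(0)=0$ (law $\Pr$), $R(n)=\{S(0),\ldots,S(n)\}$. $\|\cdot\|$ is the Euclidean norm. For $z\in\mathbb{Z}^2$ and $k\in\mathbb{N}$, $Q(z,k)=\{z+(j,j'): -k\le j,j'\le k\}$ is the square of side length $2k+1$ centered at $z$. Logarithms are base $2$. *)

theory Defs
  imports "HOL-Probability.Probability"
begin

definition srw_steps :: "(int \<times> int) set" where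
  "srw_steps = {(1,0), (-1,0), (0,1), (0,-1)}"

text \<open>Step sequences of length n; the law of the first n steps of SRW is uniform on them.\<close>
definition step_seqs :: "nat \<Rightarrow> (int \<times> int) list set" where
  "step_seqs n = {xs. length xs = n \<and> set xs \<subseteq> srw_steps}"

definition srw_law :: "nat \<Rightarrow> (int \<times> int) list pmf" where
  "srw_law n = pmf_of_set (step_seqs n)"

definition walk_pos :: "(int \<times> int) list \<Rightarrow> nat \<Rightarrow> int \<times> int" where
  "walk_pos xs m = (sum_list (map fst (take m xs)), sum_list (map snd (take m xs)))"

definition walk_range :: "(int \<times> int) list \<Rightarrow> nat \<Rightarrow> (int \<times> int) set" where
  "walk_range xs n = {walk_pos xs m | m. m \<le> n}"

definition square :: "int \<times> int \<Rightarrow> nat \<Rightarrow> (int \<times> int) set" where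
  "square z k = {(fst z + j, snd z + j') | j j'.
      - int k \<le> j \<and> j \<le> int k \<and> - int k \<le> j' \<and> j' \<le> int k}"

definition znorm :: "int \<times> int \<Rightarrow> real" where
  "znorm z = sqrt (real_of_int (fst z) ^ 2 + real_of_int (snd z) ^ 2)"

end

theory Submission
  imports Defs
begin

definition q :: "nat \<Rightarrow> int \<Rightarrow> real" where
  "q j i = (if 0 \<le> i \<and> i \<le> int j then real (j choose nat i) / 2^j else 0)"

lemma q_nonneg: "q j i \<ge> 0" by (simp add: q_def)

lemma q_zero: "q 0 i = (if i = 0 then 1 else 0)" by (auto simp: q_def)

lemma q_Suc: "q (Suc j) i = (q j i + q j (i - 1)) / 2"
proof -
  consider "i < 0" | "i = 0" | "0 < i \<and> i \<le> int j" | "i = int j + 1" | "i > int j + 1" by linarith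
  then show ?thesis
  proof cases
    case 1 then show ?thesis by (simp add: q_def)
  next
    case 2 then show ?thesis by (simp add: q_def)
  next
    case 5 then show ?thesis by (simp add: q_def)
  next
    case 3
    define l where "l = nat (i - 1)"
    have l: "i = int (Suc l)" "l < j" using 3 by (auto simp: l_def)
    have n1: "nat i = Suc l" "nat (i - 1) = l" using l by auto
    have "q (Suc j) i = real (Suc j choose Suc l) / 2^Suc j" using 3 n1 by (simp add: q_def)
    also have "\<dots> = (real (j choose l) + real (j choose Suc l)) / 2^Suc j" by simp
    also have "\<dots> = (real (j choose Suc l) / 2^j + real (j choose l) / 2^j) / 2" by (simp add: field_simps)
    also have "real (j choose Suc l) / 2^j = q j i" using 3 n1 by (simp add: q_def)
    also have "real (j choose l) / 2^j = q j (i - 1)" using 3 n1 by (simp add: q_def)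
    finally show ?thesis .
  next
    case 4
    have n1: "nat i = Suc j" "nat (i - 1) = j" using 4 by auto
    have "q (Suc j) i = 1 / 2^Suc j" using 4 n1 by (simp add: q_def)
    moreover have "q j i = 0" using 4 by (simp add: q_def)
    moreover have "q j (i - 1) = 1 / 2^j" using 4 n1 by (simp add: q_def)
    ultimately show ?thesis by simp
  qed
qed

lemma q_sym: "q j (int j - i) = q j i"
proof (cases "0 \<le> i \<and> i \<le> int j")
  case True
  define l where "l = nat i"
  have l: "i = int l" "l \<le> j" using True by (auto simp: l_def)
  have "nat (int j - i) = j - l" using l by auto
  moreover have "j choose (j - l) = j choose l" using l(2) by (rule binomial_symmetric[symmetric])
  ultimately show ?thesis using True l by (simp add: q_def)
next
  case False then show ?thesis by (auto simp: q_def)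
qed

lemma q_ratio: assumes "0 \<le> i" "i < int j"
  shows "q j (i+1) * (i+1) = q j i * (int j - i)"
proof -
  obtain l where l: "i = int l" using assms by (metis nonneg_int_cases)
  have "(j choose Suc l) * Suc l = (j choose l) * (j - l)"
    by (metis binomial_absorb_comp binomial_absorption mult.commute)
  hence "real ((j choose Suc l) * Suc l) = real ((j choose l) * (j - l))" by simp
  hence eq: "real (j choose Suc l) * (real l + 1) = real (j choose l) * (real j - real l)"
    using assms l by (simp add: of_nat_diff algebra_simps)
  moreover have "nat (i+1) = Suc l" "nat i = l" using l by auto
  ultimately have e1: "q j (i+1) = real (j choose Suc l) / 2^j" and e2: "q j i = real (j choose l) / 2^j"
    using assms l by (auto simp: q_def)
  have e3: "real_of_int (i+1) = real l + 1" and e4: "real_of_int (int j - i) = real j - real l" using l by auto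
  have e5: "real (j choose Suc l) / 2^j * (real l + 1) = real (j choose l) / 2^j * (real j - real l)"
    by (metis eq times_divide_eq_left)
  show ?thesis unfolding e1 e2 e3 e4 by (rule e5)
qed


definition cb :: "nat \<Rightarrow> real" where "cb p = real (2*p choose p) / 4^p"

lemma cb_Suc: "cb (Suc p) = cb p * (2*p+1) / (2*p+2)"
proof -
  have a: "Suc p * (Suc (Suc (2*p)) choose Suc p) = Suc (Suc (2*p)) * (Suc (2*p) choose p)"
    by (rule Suc_times_binomial)
  have b: "Suc p * (Suc (2*p) choose Suc p) = Suc (2*p) * (2*p choose p)"
    by (rule Suc_times_binomial)
  have c: "Suc (2*p) choose Suc p = Suc (2*p) choose p"
    using binomial_symmetric[of p "Suc (2*p)"] by simp
  have 2: "2 * Suc p = Suc (Suc (2*p))" by simp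
  have "Suc p * (Suc p * (2 * Suc p choose Suc p)) = Suc p * (Suc (Suc (2*p)) * (Suc (2*p) choose Suc p))"
    unfolding 2 a c by simp
  also have "\<dots> = Suc (Suc (2*p)) * (Suc p * (Suc (2*p) choose Suc p))" by simp
  also have "\<dots> = Suc p * (2 * (Suc (2*p) * (2*p choose p)))" unfolding b by simp
  finally have "Suc p * (2 * Suc p choose Suc p) = 2 * (Suc (2*p) * (2*p choose p))"
    by (metis mult_left_cancel nat.distinct(1))
  hence "real (Suc p * (2 * Suc p choose Suc p)) = real (2 * (Suc (2*p) * (2*p choose p)))"
    by (rule arg_cong)
  hence e: "real (2 * Suc p choose Suc p) * (real p + 1) = 2 * (2 * real p + 1) * real (2*p choose p)"
    by (simp only: of_nat_mult of_nat_Suc) (simp only: algebra_simps of_nat_numeral)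
  have alg: "X * (real p + 1) = 2 * (2 * real p + 1) * Y \<Longrightarrow> X / 4^Suc p = Y / 4^p * (2*p+1) / (2*p+2)"
    for X Y :: real
  proof -
    assume h: "X * (real p + 1) = 2 * (2 * real p + 1) * Y"
    have "X / 4^Suc p = X * (real p + 1) / (4^Suc p * (real p + 1))" by simp
    also have "\<dots> = 2 * (2 * real p + 1) * Y / (4^Suc p * (real p + 1))" unfolding h ..
    also have "\<dots> = Y / 4^p * (2*p+1) / (2*p+2)" by (simp add: power_Suc divide_simps) (simp add: algebra_simps)
    finally show ?thesis .
  qed
  show ?thesis unfolding cb_def by (rule alg[OF e])
qed

lemma cb_0: "cb 0 = 1" by (simp add: cb_def)
lemma cb_nonneg: "cb p \<ge> 0" by (simp add: cb_def)

lemma cb_Suc_sq: "cb (Suc p) ^ 2 = cb p ^ 2 * ((2 * real p + 1)^2 / (2 * real p + 2)^2)"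
proof -
  have "cb (Suc p) = cb p * ((2 * real p + 1) / (2 * real p + 2))" by (simp add: cb_Suc add.commute)
  thus ?thesis by (simp only: power_mult_distrib power_divide)
qed

lemma cb_upper: "cb p ^ 2 \<le> 1 / (3 * real p + 1)"
proof (induction p)
  case 0 then show ?case by (simp add: cb_0)
next
  case (Suc p)
  have poly: "(2 * real p + 1)^2 * (3 * real p + 4) \<le> (2 * real p + 2)^2 * (3 * real p + 1)"
    by (simp add: power2_eq_square algebra_simps)
  have "cb (Suc p) ^ 2 = cb p ^ 2 * ((2 * real p + 1)^2 / (2 * real p + 2)^2)"
    by (rule cb_Suc_sq)
  also have "\<dots> \<le> 1 / (3 * real p + 1) * ((2 * real p + 1)^2 / (2 * real p + 2)^2)"
    by (rule mult_right_mono[OF Suc.IH]) simp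
  also have "\<dots> \<le> 1 / (3 * real (Suc p) + 1)"
    using poly by (simp add: divide_simps) (simp add: algebra_simps)
  finally show ?case .
qed

lemma cb_lower: "p \<ge> 1 \<Longrightarrow> cb p ^ 2 \<ge> 1 / (4 * real p)"
proof (induction p rule: dec_induct)
  case base
  have h: "cb (Suc 0) = 1/2" by (simp add: cb_def)
  show ?case by (simp add: h power2_eq_square)
next
  case (step p)
  have poly: "(2 * real p + 1)^2 * (real p + 1) \<ge> real p * (2 * real p + 2)^2"
    by (simp add: power2_eq_square algebra_simps)
  have "1 / (4 * real (Suc p)) \<le> 1 / (4 * real p) * ((2 * real p + 1)^2 / (2 * real p + 2)^2)"
    using poly step.hyps by (simp add: divide_simps) (simp add: algebra_simps)
  also have "\<dots> \<le> cb p ^ 2 * ((2 * real p + 1)^2 / (2 * real p + 2)^2)"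
    by (rule mult_right_mono[OF step.IH]) simp
  also have "\<dots> = cb (Suc p) ^ 2"
    by (rule cb_Suc_sq[symmetric])
  finally show ?case .
qed


definition Mq :: "nat \<Rightarrow> real" where "Mq j = q j ((int j + 1) div 2)"

lemma Mq_cb: "Mq j = cb ((j + 1) div 2)"
proof (cases "even j")
  case True
  then obtain p where p: "j = 2*p" by blast
  have "(int j + 1) div 2 = int p" using p by simp
  moreover have "(j + 1) div 2 = p" using p by simp
  moreover have "(2::real)^(2*p) = 4^p" by (simp add: power_mult)
  ultimately show ?thesis using p by (simp add: Mq_def q_def cb_def)
next
  case False
  then obtain p where p: "j = 2*p+1" using oddE by blast
  have i1: "(int j + 1) div 2 = int p + 1" using p by simp
  have i2: "(j + 1) div 2 = Suc p" using p by simp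
  have "q (Suc j) (int p + 1) = (q j (int p + 1) + q j (int p)) / 2" by (simp add: q_Suc)
  moreover have "q j (int p) = q j (int p + 1)"
    using q_sym[of j "int p"] p by simp
  ultimately have "q j (int p + 1) = q (Suc j) (int p + 1)" by simp
  also have "\<dots> = cb (Suc p)"
  proof -
    have "(2::real)^(2*Suc p) = 4^Suc p" by (simp add: power_mult)
    moreover have "nat (int p + 1) = Suc p" by simp
    ultimately show ?thesis using p by (simp add: q_def cb_def)
  qed
  finally show ?thesis unfolding Mq_def i1 i2 .
qed


lemma Mq_nonneg: "Mq j \<ge> 0" by (simp add: Mq_def q_nonneg)

lemma Mq_upper: "Mq j ^ 2 \<le> 1 / (real j + 1)"
proof -
  have "Mq j ^ 2 \<le> 1 / (3 * real ((j + 1) div 2) + 1)" unfolding Mq_cb by (rule cb_upper)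
  also have "\<dots> \<le> 1 / (real j + 1)"
  proof -
    have "2 * ((j+1) div 2) \<ge> j" by presburger
    hence "real (2 * ((j+1) div 2)) \<ge> real j" by (simp only: of_nat_le_iff)
    hence "2 * real ((j+1) div 2) \<ge> real j" by simp
    thus ?thesis by (simp add: divide_simps)
  qed
  finally show ?thesis .
qed

lemma Mq_lower: "Mq j ^ 2 \<ge> 1 / (2 * (real j + 1))"
proof (cases "j = 0")
  case True then show ?thesis by (simp add: Mq_cb cb_0)
next
  case False
  hence p1: "(j + 1) div 2 \<ge> 1" by presburger
  have "2 * ((j+1) div 2) \<le> j + 1" by presburger
  hence "real (2 * ((j+1) div 2)) \<le> real (j + 1)" by (simp only: of_nat_le_iff)
  hence le: "2 * real ((j+1) div 2) \<le> real j + 1" by simp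
  have "1 / (2 * (real j + 1)) \<le> 1 / (4 * real ((j + 1) div 2))"
    using le p1 by (simp add: divide_simps)
  also have "\<dots> \<le> Mq j ^ 2" unfolding Mq_cb by (rule cb_lower[OF p1])
  finally show ?thesis .
qed


abbreviation i0 :: "nat \<Rightarrow> int" where "i0 j \<equiv> (int j + 1) div 2"

lemma i0_bounds: "2 * i0 j \<ge> int j" "2 * i0 j \<le> int j + 1" "i0 j \<ge> 0" by presburger+

lemma q_ratio': assumes "0 \<le> i" "i < int j"
  shows "q j (i+1) = q j i * ((real j - real_of_int i) / (real_of_int i + 1))"
proof -
  have "q j (i+1) * (real_of_int i + 1) = q j i * (real j - real_of_int i)"
    using q_ratio[OF assms] by simp
  moreover have "real_of_int i + 1 > 0" using assms by simp
  ultimately show ?thesis by (simp add: field_simps)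
qed

lemma q_gauss_right: "q j (i0 j + int t) \<le> Mq j * exp (- (real t ^ 2) / (real j + 1))"
proof (induction t)
  case 0 then show ?case by (simp add: Mq_def)
next
  case (Suc t)
  define i where "i = i0 j + int t"
  have ib: "2 * i \<ge> int j + 2 * int t" "i \<ge> 0" using i0_bounds[of j] by (auto simp: i_def)
  have IH: "q j i \<le> Mq j * exp (- (real t ^ 2) / (real j + 1))" using Suc.IH by (simp add: i_def)
  have eq: "i0 j + int (Suc t) = i + 1" by (simp add: i_def)
  show ?case
  proof (cases "i < int j")
    case False
    hence "q j (i+1) = 0" by (simp add: q_def)
    then show ?thesis unfolding eq using Mq_nonneg[of j] by simp
  next
    case True
    define E where "E = exp (- (2 * real t + 1) / (real j + 1))"
    have E0: "1 + (- (2 * real t + 1) / (real j + 1)) \<le> E"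
      unfolding E_def by (rule exp_ge_add_one_self)
    have E1: "1 - (2 * real t + 1) / (real j + 1) \<le> E"
      using E0 minus_divide_left[of "2 * real t + 1" "real j + 1"] by linarith
    have Ri: "real_of_int i + 1 \<le> real j" "2 * real_of_int i \<ge> real j + 2 * real t" "real_of_int i \<ge> 0"
      using True ib by linarith+
    have "(real_of_int i + 1) * (2 * real t + 1) / (real j + 1) \<le> 2 * real t + 1"
      using Ri by (simp add: divide_simps)
    hence "real j - real_of_int i \<le> (real_of_int i + 1) * (1 - (2 * real t + 1) / (real j + 1))"
      using Ri by (simp add: algebra_simps)
    also have "\<dots> \<le> (real_of_int i + 1) * E" using E1 Ri by (intro mult_left_mono) auto
    finally have r: "(real j - real_of_int i) / (real_of_int i + 1) \<le> E"
      using Ri by (simp add: divide_simps mult.commute)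
    have "q j (i+1) = q j i * ((real j - real_of_int i) / (real_of_int i + 1))"
      using q_ratio'[OF ib(2) True] .
    also have "\<dots> \<le> q j i * E" using r q_nonneg[of j i] by (rule mult_left_mono)
    also have "\<dots> \<le> Mq j * exp (- (real t ^ 2) / (real j + 1)) * E"
      using IH by (rule mult_right_mono) (simp add: E_def)
    also have "\<dots> = Mq j * exp (- (real (Suc t) ^ 2) / (real j + 1))"
    proof -
      have n: "- (real t ^ 2) + - (2 * real t + 1) = - (real (Suc t) ^ 2)"
        by (simp add: power2_eq_square algebra_simps)
      have "- (real t ^ 2) / (real j + 1) + - (2 * real t + 1) / (real j + 1) = - (real (Suc t) ^ 2) / (real j + 1)"
        unfolding add_divide_distrib[symmetric] n ..
      thus ?thesis unfolding E_def mult.assoc exp_add[symmetric] by simp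
    qed
    finally show ?thesis unfolding eq .
  qed
qed

lemma q_lower_right: "i0 j + int t \<le> int j \<Longrightarrow>
   q j (i0 j + int t) \<ge> Mq j * (1 - 4 * real t * (real t + 1) / (real j + 2))"
proof (induction t)
  case 0 then show ?case by (simp add: Mq_def)
next
  case (Suc t)
  define i where "i = i0 j + int t"
  have ib: "2 * i \<ge> int j + 2 * int t" "2 * i \<le> int j + 1 + 2 * int t" "i \<ge> 0"
    using i0_bounds[of j] by (auto simp: i_def)
  have eq: "i0 j + int (Suc t) = i + 1" by (simp add: i_def)
  have lt: "i < int j" using Suc.prems eq by simp
  have IH: "q j i \<ge> Mq j * (1 - 4 * real t * (real t + 1) / (real j + 2))"
    using Suc.IH lt by (simp add: i_def)
  define a where "a = 4 * real t * (real t + 1) / (real j + 2)"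
  define x where "x = 4 * (real t + 1) / (real j + 2)"
  define r where "r = (real j - real_of_int i) / (real_of_int i + 1)"
  have Ri: "real_of_int i + 1 \<le> real j" "2 * real_of_int i \<ge> real j + 2 * real t"
     "2 * real_of_int i \<le> real j + 1 + 2 * real t" "real_of_int i \<ge> 0"
    using lt ib by linarith+
  have a0: "a \<ge> 0" and x0: "x \<ge> 0" by (simp_all add: a_def x_def)
  have r0: "r \<ge> 0" and r1: "r \<le> 1" using Ri by (simp_all add: r_def divide_simps)
  have "2 * real_of_int i + 1 - real j \<le> 2 * (real t + 1)" using Ri by simp
  also have "\<dots> \<le> 4 * (real t + 1) * (real_of_int i + 1) / (real j + 2)"
  proof -
    have "(2 * (real t + 1)) * (real j + 2) \<le> (2 * (real t + 1)) * (2 * (real_of_int i + 1))"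
      using Ri by (intro mult_left_mono) auto
    thus ?thesis by (simp add: divide_simps algebra_simps)
  qed
  finally have "real j - real_of_int i \<ge> (real_of_int i + 1) * (1 - x)"
    unfolding x_def by (simp add: algebra_simps)
  hence rx: "r \<ge> 1 - x" using Ri by (simp add: r_def divide_simps mult.commute)
  have key: "(1 - a) * r \<ge> 1 - a - x"
  proof (cases "1 - a \<ge> 0")
    case True
    have "(1 - a) * r \<ge> (1 - a) * (1 - x)" using rx True by (rule mult_left_mono)
    moreover have "(1 - a) * (1 - x) \<ge> 1 - a - x" using a0 x0 by (simp add: algebra_simps)
    ultimately show ?thesis by linarith
  next
    case False
    have "(1 - a) * r \<ge> (1 - a) * 1" using False r1 by (intro mult_left_mono_neg) auto
    then show ?thesis using x0 by simp
  qed
  have "q j (i+1) = q j i * r" unfolding r_def using q_ratio'[OF ib(3) lt] .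
  also have "\<dots> \<ge> Mq j * (1 - a) * r" using IH r0 unfolding a_def by (rule mult_right_mono)
  finally have "q j (i+1) \<ge> Mq j * ((1 - a) * r)" by (simp add: mult.assoc)
  moreover have "Mq j * ((1 - a) * r) \<ge> Mq j * (1 - a - x)" using key Mq_nonneg by (rule mult_left_mono)
  moreover have "a + x \<le> 4 * real (Suc t) * (real (Suc t) + 1) / (real j + 2)"
  proof -
    have num: "4 * real t * (real t + 1) + 4 * (real t + 1) \<le> 4 * real (Suc t) * (real (Suc t) + 1)"
      by (simp add: algebra_simps)
    have "a + x = (4 * real t * (real t + 1) + 4 * (real t + 1)) / (real j + 2)"
      unfolding a_def x_def by (rule add_divide_distrib[symmetric])
    thus ?thesis using divide_right_mono[OF num, of "real j + 2"] by simp
  qed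
  moreover have "Mq j * (1 - a - x) \<ge> Mq j * (1 - 4 * real (Suc t) * (real (Suc t) + 1) / (real j + 2))"
    using calculation(3) Mq_nonneg by (intro mult_left_mono) auto
  ultimately show ?case unfolding eq by linarith
qed



lemma q_gauss_ge: assumes "i \<ge> i0 j"
  shows "q j i \<le> 2 * Mq j * exp (- ((2 * real_of_int i - real j) ^ 2) / (8 * (real j + 1)))"
proof -
  define t where "t = nat (i - i0 j)"
  have it: "i = i0 j + int t" using assms by (simp add: t_def)
  define s where "s = 2 * real_of_int i - real j"
  have s0: "s \<ge> 0" and ts: "2 * real t \<ge> s - 1"
    using i0_bounds[of j] it by (simp_all add: s_def)
  have tt: "real t ^ 2 \<ge> s ^ 2 / 8 - 1/4"
  proof (cases "s \<le> 1")
    case True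
    have "s ^ 2 \<le> 1" using True s0 by (simp add: power_le_one)
    moreover have "real t ^ 2 \<ge> 0" by simp
    ultimately show ?thesis by linarith
  next
    case False
    hence "real t \<ge> (s - 1) / 2" using ts by simp
    hence "real t ^ 2 \<ge> ((s - 1) / 2) ^ 2" using False by (intro power_mono) auto
    moreover have "((s - 1) / 2) ^ 2 - (s ^ 2 / 8 - 1/4) = (s - 2) ^ 2 / 8"
      by (simp add: power2_eq_square field_simps)
    ultimately show ?thesis by (smt (verit) zero_le_power2 divide_nonneg_pos)
  qed
  have j1: "real j + 1 > 0" by simp
  have "- (real t ^ 2) / (real j + 1) \<le> - (s ^ 2 / 8 - 1/4) / (real j + 1)"
    using tt j1 by (intro divide_right_mono) auto
  also have "\<dots> = - (s ^ 2) / (8 * (real j + 1)) + 1 / (4 * (real j + 1))"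
  proof -
    have "\<And>J::real. J > 0 \<Longrightarrow> - (s ^ 2 / 8 - 1/4) / J = - (s ^ 2) / (8 * J) + 1 / (4 * J)"
      by (simp add: field_simps)
    thus ?thesis using j1 by blast
  qed
  also have "\<dots> \<le> - (s ^ 2) / (8 * (real j + 1)) + 1/2"
  proof -
    have "1 / (4 * (real j + 1)) \<le> 1/2" by (simp add: divide_simps)
    thus ?thesis by linarith
  qed
  finally have ex: "exp (- (real t ^ 2) / (real j + 1)) \<le> exp (- (s ^ 2) / (8 * (real j + 1))) * exp (1/2)"
    by (simp add: exp_add[symmetric])
  also have "\<dots> \<le> exp (- (s ^ 2) / (8 * (real j + 1))) * 2"
    by (intro mult_left_mono exp_half_le2) auto
  finally have ex2: "exp (- (real t ^ 2) / (real j + 1)) \<le> 2 * exp (- (s ^ 2) / (8 * (real j + 1)))" by simp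
  have "q j i \<le> Mq j * exp (- (real t ^ 2) / (real j + 1))" using q_gauss_right[of j t] it by simp
  also have "\<dots> \<le> Mq j * (2 * exp (- (s ^ 2) / (8 * (real j + 1))))"
    using ex2 Mq_nonneg by (rule mult_left_mono)
  finally show ?thesis by (simp add: s_def)
qed

lemma q_gauss: "q j i \<le> 2 * Mq j * exp (- ((2 * real_of_int i - real j) ^ 2) / (8 * (real j + 1)))"
proof (cases "i \<ge> i0 j")
  case True then show ?thesis by (rule q_gauss_ge)
next
  case False
  hence "int j - i \<ge> i0 j" using i0_bounds[of j] by linarith
  from q_gauss_ge[OF this] q_sym[of j i]
  have "q j i \<le> 2 * Mq j * exp (- ((2 * real_of_int (int j - i) - real j) ^ 2) / (8 * (real j + 1)))" by simp
  moreover have "(2 * real_of_int (int j - i) - real j) ^ 2 = (2 * real_of_int i - real j) ^ 2"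
    by (simp add: power2_eq_square algebra_simps)
  ultimately show ?thesis by simp
qed

lemma q_lower_ge: assumes "i \<ge> i0 j" "4 * (2 * i - int j) ^ 2 \<le> int j"
  shows "q j i \<ge> Mq j / 2"
proof -
  define t where "t = nat (i - i0 j)"
  have it: "i = i0 j + int t" using assms by (simp add: t_def)
  define s where "s = 2 * i - int j"
  have s0: "s \<ge> 0" and ts: "2 * int t \<le> s"
    using i0_bounds[of j] it by (simp_all add: s_def)
  have ss: "s \<le> s ^ 2" using s0 by (cases "s = 0") (auto simp: power2_eq_square)
  have sj: "4 * s ^ 2 \<le> int j" using assms(2) by (simp add: s_def)
  have ij: "i \<le> int j" using ss sj s0 by (simp add: s_def)
  have "(2 * int t) * (2 * int t + 2) \<le> s * (s + 2)"
    using ts s0 by (intro mult_mono) auto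
  moreover have "s * (s + 2) \<le> 2 * s ^ 2 + 1"
  proof -
    have "0 \<le> (s - 1) ^ 2" by simp
    thus ?thesis by (simp add: power2_eq_square algebra_simps)
  qed
  ultimately have "8 * int t * (int t + 1) \<le> int j + 2" using sj by (simp add: algebra_simps)
  hence "real_of_int (8 * int t * (int t + 1)) \<le> real_of_int (int j + 2)" by (simp only: of_int_le_iff)
  hence le: "8 * real t * (real t + 1) \<le> real j + 2" by simp
  have "1 - 4 * real t * (real t + 1) / (real j + 2) \<ge> 1/2"
    using le by (simp add: divide_simps)
  hence "Mq j * (1 - 4 * real t * (real t + 1) / (real j + 2)) \<ge> Mq j * (1/2)"
    using Mq_nonneg by (intro mult_left_mono) auto
  moreover have "q j (i0 j + int t) \<ge> Mq j * (1 - 4 * real t * (real t + 1) / (real j + 2))"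
    using q_lower_right[of j t] ij it by simp
  ultimately show ?thesis unfolding it by linarith
qed

lemma q_lower: assumes "4 * (2 * i - int j) ^ 2 \<le> int j"
  shows "q j i \<ge> Mq j / 2"
proof (cases "i \<ge> i0 j")
  case True then show ?thesis using assms by (rule q_lower_ge)
next
  case False
  hence a: "int j - i \<ge> i0 j" using i0_bounds[of j] by linarith
  have "(2 * (int j - i) - int j) ^ 2 = (2 * i - int j) ^ 2" by (simp add: power2_eq_square algebra_simps)
  with assms have "4 * (2 * (int j - i) - int j) ^ 2 \<le> int j" by simp
  from q_lower_ge[OF a this] q_sym[of j i] show ?thesis by simp
qed



definition f :: "nat \<Rightarrow> int \<Rightarrow> int \<Rightarrow> real" where
  "f m a b = (if even (int m + a + b) then q m ((int m + a + b) div 2) * q m ((int m + a - b) div 2) else 0)"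

lemma f_nonneg: "f m a b \<ge> 0" by (simp add: f_def q_nonneg)

lemma f_zero: "f 0 a b = (if a = 0 \<and> b = 0 then 1 else 0)"
proof (cases "a = 0 \<and> b = 0")
  case True
  then show ?thesis by (simp add: f_def q_zero)
next
  case False
  hence "odd (a + b) \<or> (a + b) div 2 \<noteq> 0 \<or> (a - b) div 2 \<noteq> 0" by presburger
  then show ?thesis using False by (auto simp add: f_def q_zero)
qed

lemma sum_steps: "(\<Sum>e\<in>srw_steps. g e) = g (1,0) + g (-1,0) + g (0,1) + g (0,-1)"
  by (simp add: srw_steps_def add.assoc)

lemma f_Suc: "f (Suc m) a b = (\<Sum>e\<in>srw_steps. f m (a - fst e) (b - snd e)) / 4"
proof (cases "even (int m + 1 + a + b)")
  case True
  define u where "u = (int m + 1 + a + b) div 2"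
  define v where "v = (int m + 1 + a - b) div 2"
  have p: "even (int m + (a - 1) + b)" "even (int m + (a + 1) + b)"
          "even (int m + a + (b - 1))" "even (int m + a + (b + 1))" using True by presburger+
  have d: "(int m + (a - 1) + b) div 2 = u - 1" "(int m + (a - 1) - b) div 2 = v - 1"
          "(int m + (a + 1) + b) div 2 = u" "(int m + (a + 1) - b) div 2 = v"
          "(int m + a + (b - 1)) div 2 = u - 1" "(int m + a - (b - 1)) div 2 = v"
          "(int m + a + (b + 1)) div 2 = u" "(int m + a - (b + 1)) div 2 = v - 1"
    using True unfolding u_def v_def by presburger+
  have e1: "int (Suc m) + a + b = int m + 1 + a + b" and e2: "int (Suc m) + a - b = int m + 1 + a - b" by simp_all
  have L: "f (Suc m) a b = q (Suc m) u * q (Suc m) v"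
    unfolding f_def e1 e2 u_def[symmetric] v_def[symmetric] using True by simp
  have R: "(\<Sum>e\<in>srw_steps. f m (a - fst e) (b - snd e)) =
      q m (u - 1) * q m (v - 1) + q m u * q m v + q m (u - 1) * q m v + q m u * q m (v - 1)"
    unfolding sum_steps using p d by (simp add: f_def diff_minus_eq_add)
  show ?thesis unfolding L R q_Suc by (simp add: field_simps)
next
  case False
  have p: "odd (int m + (a - 1) + b)" "odd (int m + (a + 1) + b)"
          "odd (int m + a + (b - 1))" "odd (int m + a + (b + 1))" using False by presburger+
  have e1: "int (Suc m) + a + b = int m + 1 + a + b" by simp
  have L: "f (Suc m) a b = 0" unfolding f_def e1 using False by simp
  show ?thesis unfolding L sum_steps using p by (simp add: f_def diff_minus_eq_add)
qed

lemma f_gauss: "f m a b \<le> 4 / (real m + 1) * exp (- (real_of_int a ^ 2 + real_of_int b ^ 2) / (4 * (real m + 1)))"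
proof (cases "even (int m + a + b)")
  case False
  then show ?thesis by (simp add: f_def)
next
  case True
  define u where "u = (int m + a + b) div 2"
  define v where "v = (int m + a - b) div 2"
  have uu: "2 * real_of_int u - real m = real_of_int a + real_of_int b"
  proof -
    have "2 * u = int m + a + b" using True unfolding u_def by presburger
    hence "real_of_int (2 * u) = real_of_int (int m + a + b)" by simp
    thus ?thesis by simp
  qed
  have vv: "2 * real_of_int v - real m = real_of_int a - real_of_int b"
  proof -
    have "2 * v = int m + a - b" using True unfolding v_def by presburger
    hence "real_of_int (2 * v) = real_of_int (int m + a - b)" by simp
    thus ?thesis by simp
  qed
  define A where "A = real_of_int a" define B where "B = real_of_int b"
  define K where "K = 8 * (real m + 1)"
  have K0: "K > 0" by (simp add: K_def)
  have "f m a b = q m u * q m v" using True by (simp add: f_def u_def v_def)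
  also have "\<dots> \<le> (2 * Mq m * exp (- ((A + B) ^ 2) / K)) * (2 * Mq m * exp (- ((A - B) ^ 2) / K))"
    using q_gauss[of m u] q_gauss[of m v] unfolding uu vv A_def B_def K_def
    by (intro mult_mono) (auto simp: q_nonneg Mq_nonneg)
  also have "\<dots> = 4 * Mq m ^ 2 * (exp (- ((A + B) ^ 2) / K) * exp (- ((A - B) ^ 2) / K))"
    by (simp add: power2_eq_square mult_ac)
  also have "exp (- ((A + B) ^ 2) / K) * exp (- ((A - B) ^ 2) / K) = exp (- ((A + B) ^ 2) / K + - ((A - B) ^ 2) / K)"
    by (rule exp_add[symmetric])
  also have "- ((A + B) ^ 2) / K + - ((A - B) ^ 2) / K = - (A ^ 2 + B ^ 2) / (4 * (real m + 1))"
  proof -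
    have h: "\<And>M::real. M > 0 \<Longrightarrow> - ((A + B) ^ 2) / (8 * M) + - ((A - B) ^ 2) / (8 * M) = - (A ^ 2 + B ^ 2) / (4 * M)"
      by (simp add: field_simps power2_eq_square)
    show ?thesis unfolding K_def by (rule h) simp
  qed
  also have "4 * Mq m ^ 2 * exp (- (A ^ 2 + B ^ 2) / (4 * (real m + 1)))
      \<le> 4 * (1 / (real m + 1)) * exp (- (A ^ 2 + B ^ 2) / (4 * (real m + 1)))"
    using Mq_upper[of m] by (intro mult_right_mono) auto
  finally show ?thesis by (simp add: A_def B_def)
qed

lemma f_lower: assumes "even (int m + a + b)" "8 * (a ^ 2 + b ^ 2) \<le> int m"
  shows "f m a b \<ge> 1 / (8 * (real m + 1))"
proof -
  define u where "u = (int m + a + b) div 2"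
  define v where "v = (int m + a - b) div 2"
  have uu: "2 * u - int m = a + b" using assms(1) unfolding u_def by presburger
  have vv: "2 * v - int m = a - b" using assms(1) unfolding v_def by presburger
  have s1: "(a + b) ^ 2 \<le> 2 * (a ^ 2 + b ^ 2)"
  proof - have "0 \<le> (a - b) ^ 2" by simp thus ?thesis by (simp add: power2_eq_square algebra_simps) qed
  have s2: "(a - b) ^ 2 \<le> 2 * (a ^ 2 + b ^ 2)"
  proof - have "0 \<le> (a + b) ^ 2" by simp thus ?thesis by (simp add: power2_eq_square algebra_simps) qed
  have qu: "q m u \<ge> Mq m / 2" using assms(2) s1 uu by (intro q_lower) simp
  have qv: "q m v \<ge> Mq m / 2" using assms(2) s2 vv by (intro q_lower) simp
  have "1 / (8 * (real m + 1)) = (1 / (2 * (real m + 1))) / 4" by simp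
  also have "\<dots> \<le> Mq m ^ 2 / 4" by (rule divide_right_mono[OF Mq_lower]) simp
  also have "\<dots> = (Mq m / 2) * (Mq m / 2)" by (simp add: power2_eq_square)
  also have "\<dots> \<le> q m u * q m v" using qu qv Mq_nonneg[of m] by (intro mult_mono) auto
  also have "\<dots> = f m a b" using assms(1) by (simp add: f_def u_def v_def)
  finally show ?thesis .
qed



definition padd :: "int \<times> int \<Rightarrow> int \<times> int \<Rightarrow> int \<times> int" where
  "padd x e = (fst x + fst e, snd x + snd e)"

fun hitp :: "(int \<times> int) set \<Rightarrow> nat \<Rightarrow> int \<times> int \<Rightarrow> real" where
  "hitp A 0 x = (if x \<in> A then 1 else 0)"
| "hitp A (Suc n) x = (if x \<in> A then 1 else (\<Sum>e\<in>srw_steps. hitp A n (padd x e)) / 4)"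

definition visf :: "(int \<times> int) set \<Rightarrow> nat \<Rightarrow> int \<times> int \<Rightarrow> real" where
  "visf A n x = (\<Sum>m\<le>n. \<Sum>y\<in>A. f m (fst y - fst x) (snd y - snd x))"

lemma visf_nonneg: "visf A n x \<ge> 0"
  unfolding visf_def by (intro sum_nonneg) (simp add: f_nonneg)

lemma visf_mono: "n \<le> n' \<Longrightarrow> visf A n x \<le> visf A n' x"
  unfolding visf_def by (intro sum_mono2) (auto intro!: sum_nonneg simp: f_nonneg)

lemma visf_Suc: assumes "finite A"
  shows "visf A (Suc n) x = (if x \<in> A then 1 else 0) + (\<Sum>e\<in>srw_steps. visf A n (padd x e)) / 4"
proof -
  have z: "(\<Sum>y\<in>A. f 0 (fst y - fst x) (snd y - snd x)) = (if x \<in> A then 1 else 0)"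
  proof -
    have "(\<Sum>y\<in>A. f 0 (fst y - fst x) (snd y - snd x)) = (\<Sum>y\<in>A. if y = x then 1 else 0)"
      by (intro sum.cong) (auto simp: f_zero prod_eq_iff)
    also have "\<dots> = (if x \<in> A then 1 else 0)" using assms by (simp add: sum.delta')
    finally show ?thesis .
  qed
  have s: "(\<Sum>y\<in>A. f (Suc m) (fst y - fst x) (snd y - snd x))
      = (\<Sum>e\<in>srw_steps. \<Sum>y\<in>A. f m (fst y - fst (padd x e)) (snd y - snd (padd x e))) / 4" for m
  proof -
    have "(\<Sum>y\<in>A. f (Suc m) (fst y - fst x) (snd y - snd x))
       = (\<Sum>y\<in>A. (\<Sum>e\<in>srw_steps. f m (fst y - fst (padd x e)) (snd y - snd (padd x e))) / 4)"
      by (intro sum.cong) (simp_all add: f_Suc padd_def algebra_simps)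
    also have "\<dots> = (\<Sum>e\<in>srw_steps. \<Sum>y\<in>A. f m (fst y - fst (padd x e)) (snd y - snd (padd x e))) / 4"
      by (simp add: sum_divide_distrib[symmetric] sum.swap[of _ A])
    finally show ?thesis .
  qed
  have "visf A (Suc n) x = (\<Sum>y\<in>A. f 0 (fst y - fst x) (snd y - snd x)) +
      (\<Sum>m\<le>n. \<Sum>y\<in>A. f (Suc m) (fst y - fst x) (snd y - snd x))"
    unfolding visf_def by (rule sum.atMost_Suc_shift)
  also have "(\<Sum>m\<le>n. \<Sum>y\<in>A. f (Suc m) (fst y - fst x) (snd y - snd x))
     = (\<Sum>m\<le>n. (\<Sum>e\<in>srw_steps. \<Sum>y\<in>A. f m (fst y - fst (padd x e)) (snd y - snd (padd x e))) / 4)"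
    by (simp only: s)
  also have "\<dots> = (\<Sum>e\<in>srw_steps. visf A n (padd x e)) / 4"
    unfolding visf_def by (simp add: sum_divide_distrib[symmetric] sum.swap[of _ "{..n}"])
  finally show ?thesis unfolding z .
qed

lemma hit_vis: assumes "finite A" "g \<ge> 0" "\<forall>y\<in>A. g \<le> visf A j y"
  shows "hitp A n x * g \<le> visf A (n + j) x"
proof (induction n arbitrary: x)
  case 0 then show ?case using assms visf_nonneg[of A j x] by auto
next
  case (Suc n)
  show ?case
  proof (cases "x \<in> A")
    case True
    have "g \<le> visf A j x" using assms True by auto
    also have "\<dots> \<le> visf A (Suc n + j) x" by (rule visf_mono) simp
    finally show ?thesis using True by simp
  next
    case False
    have "hitp A (Suc n) x * g = (\<Sum>e\<in>srw_steps. hitp A n (padd x e) * g) / 4"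
      using False by (simp add: sum_distrib_right)
    also have "\<dots> \<le> (\<Sum>e\<in>srw_steps. visf A (n + j) (padd x e)) / 4"
      by (intro divide_right_mono sum_mono Suc.IH) simp
    also have "\<dots> = visf A (Suc n + j) x" using visf_Suc[OF assms(1), of "n + j" x] False by simp
    finally show ?thesis .
  qed
qed

lemma step_seqs_Suc: "step_seqs (Suc n) = (\<lambda>(e, xs). e # xs) ` (srw_steps \<times> step_seqs n)"
  unfolding step_seqs_def by (auto simp: length_Suc_conv)

lemma finite_step_seqs: "finite (step_seqs n)"
proof -
  have "finite {xs. set xs \<subseteq> srw_steps \<and> length xs = n}"
    by (rule finite_lists_length_eq) (simp add: srw_steps_def)
  thus ?thesis unfolding step_seqs_def by (simp add: conj_commute)
qed

lemma card_step_seqs: "card (step_seqs n) = 4 ^ n"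
proof -
  have "card {xs. set xs \<subseteq> srw_steps \<and> length xs = n} = card srw_steps ^ n"
    by (rule card_lists_length_eq) (simp add: srw_steps_def)
  moreover have "card srw_steps = 4" by (simp add: srw_steps_def)
  ultimately show ?thesis unfolding step_seqs_def by (simp add: conj_commute)
qed

lemma walk_pos_0: "walk_pos xs 0 = (0, 0)" by (simp add: walk_pos_def)
lemma walk_pos_Cons: "walk_pos (e # xs) (Suc m) = padd e (walk_pos xs m)"
  by (simp add: walk_pos_def padd_def)

definition hitset :: "(int \<times> int) set \<Rightarrow> nat \<Rightarrow> int \<times> int \<Rightarrow> (int \<times> int) list set" where
  "hitset A n x = {xs \<in> step_seqs n. \<exists>m\<le>n. padd x (walk_pos xs m) \<in> A}"

lemma padd_0: "padd x (0, 0) = x" by (simp add: padd_def)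
lemma padd_assoc: "padd x (padd e p) = padd (padd x e) p" by (simp add: padd_def)

lemma hitset_Suc: assumes "x \<notin> A"
  shows "hitset A (Suc n) x = (\<lambda>(e, xs). e # xs) ` (SIGMA e:srw_steps. hitset A n (padd x e))"
proof (rule set_eqI)
  fix ys
  show "ys \<in> hitset A (Suc n) x \<longleftrightarrow> ys \<in> (\<lambda>(e, xs). e # xs) ` (SIGMA e:srw_steps. hitset A n (padd x e))"
  proof
    assume "ys \<in> hitset A (Suc n) x"
    then obtain m where ys: "ys \<in> step_seqs (Suc n)" "m \<le> Suc n" "padd x (walk_pos ys m) \<in> A"
      by (auto simp: hitset_def)
    then obtain e xs where exs: "ys = e # xs" "e \<in> srw_steps" "xs \<in> step_seqs n"
      unfolding step_seqs_Suc by auto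
    have "m \<noteq> 0" using ys(3) assms by (metis walk_pos_0 padd_0)
    then obtain m' where m: "m = Suc m'" by (cases m) auto
    have "padd (padd x e) (walk_pos xs m') \<in> A" using ys(3) by (simp add: exs m walk_pos_Cons padd_assoc)
    hence "xs \<in> hitset A n (padd x e)" using exs ys(2) m by (auto simp: hitset_def)
    thus "ys \<in> (\<lambda>(e, xs). e # xs) ` (SIGMA e:srw_steps. hitset A n (padd x e))"
      using exs by auto
  next
    assume "ys \<in> (\<lambda>(e, xs). e # xs) ` (SIGMA e:srw_steps. hitset A n (padd x e))"
    then obtain e xs where exs: "ys = e # xs" "e \<in> srw_steps" "xs \<in> hitset A n (padd x e)" by auto
    then obtain m where m: "xs \<in> step_seqs n" "m \<le> n" "padd (padd x e) (walk_pos xs m) \<in> A"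
      by (auto simp: hitset_def)
    have "ys \<in> step_seqs (Suc n)" unfolding step_seqs_Suc using exs m by auto
    moreover have "padd x (walk_pos ys (Suc m)) \<in> A" using m by (simp add: exs walk_pos_Cons padd_assoc)
    ultimately show "ys \<in> hitset A (Suc n) x" using m unfolding hitset_def by auto
  qed
qed

lemma card_hitset: "real (card (hitset A n x)) = 4 ^ n * hitp A n x"
proof (induction n arbitrary: x)
  case 0
  have s0: "step_seqs 0 = {[]}" by (auto simp: step_seqs_def)
  show ?case by (simp add: hitset_def s0 walk_pos_0 padd_0)
next
  case (Suc n)
  show ?case
  proof (cases "x \<in> A")
    case True
    have "hitset A (Suc n) x = step_seqs (Suc n)"
      using True by (auto simp: hitset_def walk_pos_0 padd_0 intro: exI[of _ 0])
    then show ?thesis using True by (simp add: card_step_seqs)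
  next
    case False
    have inj: "inj_on (\<lambda>(e, xs). e # xs) (SIGMA e:srw_steps. hitset A n (padd x e))"
      by (auto simp: inj_on_def)
    have fin: "finite (hitset A n y)" for y
      using finite_step_seqs[of n] by (auto simp: hitset_def)
    have "card (hitset A (Suc n) x) = (\<Sum>e\<in>srw_steps. card (hitset A n (padd x e)))"
      unfolding hitset_Suc[OF False] card_image[OF inj]
      by (rule card_SigmaI) (auto simp: fin srw_steps_def)
    hence "real (card (hitset A (Suc n) x)) = (\<Sum>e\<in>srw_steps. 4 ^ n * hitp A n (padd x e))"
      by (simp add: Suc.IH)
    then show ?thesis using False by (simp add: sum_distrib_left[symmetric])
  qed
qed

lemma prob_hit: "measure_pmf.prob (srw_law n) {xs. walk_range xs n \<inter> A \<noteq> {}} = hitp A n (0, 0)"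
proof -
  have ne: "step_seqs n \<noteq> {}"
  proof -
    have "replicate n (1, 0) \<in> step_seqs n" by (auto simp: step_seqs_def srw_steps_def)
    thus ?thesis by auto
  qed
  have eq: "step_seqs n \<inter> {xs. walk_range xs n \<inter> A \<noteq> {}} = hitset A n (0, 0)"
    by (auto simp: hitset_def walk_range_def padd_def)
  have "measure_pmf.prob (srw_law n) {xs. walk_range xs n \<inter> A \<noteq> {}}
     = real (card (hitset A n (0, 0))) / real (card (step_seqs n))"
    unfolding srw_law_def measure_pmf_of_set[OF ne finite_step_seqs] eq ..
  also have "\<dots> = hitp A n (0, 0)" by (simp add: card_hitset card_step_seqs)
  finally show ?thesis .
qed



lemma square_mem: "y \<in> square z k \<longleftrightarrow> \<bar>fst y - fst z\<bar> \<le> int k \<and> \<bar>snd y - snd z\<bar> \<le> int k"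
proof
  assume "y \<in> square z k" then show "\<bar>fst y - fst z\<bar> \<le> int k \<and> \<bar>snd y - snd z\<bar> \<le> int k"
    by (auto simp: square_def)
next
  assume a: "\<bar>fst y - fst z\<bar> \<le> int k \<and> \<bar>snd y - snd z\<bar> \<le> int k"
  have "y = (fst z + (fst y - fst z), snd z + (snd y - snd z))" by simp
  thus "y \<in> square z k" unfolding square_def using a by (intro CollectI exI[of _ "fst y - fst z"] exI[of _ "snd y - snd z"]) auto
qed

lemma finite_square: "finite (square z k)"
proof -
  have "square z k \<subseteq> (\<lambda>(j, j'). (fst z + j, snd z + j')) ` ({- int k..int k} \<times> {- int k..int k})"
    by (auto simp: square_def)
  thus ?thesis by (rule finite_subset) auto
qed

lemma z_in_square: "z \<in> square z k" by (simp add: square_mem)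

lemma card_square_pos: "card (square z k) > 0"
  using finite_square z_in_square by (metis card_gt_0_iff empty_iff)

lemma sum_pairs: "(\<Sum>m<2*N. g m) = (\<Sum>l<N. g (2*l) + g (2*l+1))" for g :: "nat \<Rightarrow> real"
  by (induction N) (simp_all add: algebra_simps)

lemma harmonic_ln: "(\<Sum>l\<in>{L..<L'}. 1 / (real l + 1)) \<ge> ln (real L' + 1) - ln (real L + 1)"
proof (induction L')
  case 0 then show ?case by simp
next
  case (Suc L')
  show ?case
  proof (cases "L \<le> L'")
    case True
    have pr: "(real L' + 1) * (1 + 1 / (real L' + 1)) = real (Suc L') + 1" by (simp add: field_simps)
    have "ln (real (Suc L') + 1) = ln (real L' + 1) + ln (1 + 1 / (real L' + 1))"
      unfolding pr[symmetric] by (rule ln_mult_pos) (auto simp: add_pos_pos)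
    hence "ln (real (Suc L') + 1) - ln (real L' + 1) = ln (1 + 1 / (real L' + 1))" by simp
    also have "\<dots> \<le> 1 / (real L' + 1)" by (rule ln_add_one_self_le_self) simp
    finally have "ln (real (Suc L') + 1) - ln (real L' + 1) \<le> 1 / (real L' + 1)" .
    moreover have "(\<Sum>l\<in>{L..<Suc L'}. 1 / (real l + 1)) = (\<Sum>l\<in>{L..<L'}. 1 / (real l + 1)) + 1 / (real L' + 1)"
      using True by simp
    ultimately show ?thesis using Suc.IH by linarith
  next
    case False
    hence "{L..<Suc L'} = {}" by auto
    moreover have "ln (real (Suc L') + 1) \<le> ln (real L + 1)" using False by simp
    ultimately show ?thesis by simp
  qed
qed

lemma point_lower: assumes "8 * (a ^ 2 + b ^ 2) \<le> 2 * int L" "2 * L' \<le> n + 1"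
  shows "(\<Sum>m\<le>n. f m a b) \<ge> (\<Sum>l\<in>{L..<L'}. 1 / (16 * (real l + 1)))"
proof -
  have pl: "f (2*l) a b + f (2*l+1) a b \<ge> 1 / (16 * (real l + 1))" if "l \<ge> L" for l
  proof (cases "even (int (2*l) + a + b)")
    case True
    have "f (2*l) a b \<ge> 1 / (8 * (real (2*l) + 1))"
      using True assms(1) that by (intro f_lower) auto
    moreover have "1 / (16 * (real l + 1)) \<le> 1 / (8 * (real (2*l) + 1))" by (simp add: divide_simps)
    ultimately show ?thesis using f_nonneg[of "2*l+1" a b] by linarith
  next
    case False
    hence "even (int (2*l+1) + a + b)" by simp
    hence "f (2*l+1) a b \<ge> 1 / (8 * (real (2*l+1) + 1))"
      using assms(1) that by (intro f_lower) auto
    moreover have "1 / (16 * (real l + 1)) = 1 / (8 * (real (2*l+1) + 1))" by simp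
    ultimately show ?thesis using f_nonneg[of "2*l" a b] by linarith
  qed
  have "(\<Sum>l\<in>{L..<L'}. 1 / (16 * (real l + 1))) \<le> (\<Sum>l\<in>{L..<L'}. f (2*l) a b + f (2*l+1) a b)"
    by (intro sum_mono pl) auto
  also have "\<dots> \<le> (\<Sum>l<L'. f (2*l) a b + f (2*l+1) a b)"
    by (intro sum_mono2) (auto simp: f_nonneg add_nonneg_nonneg)
  also have "\<dots> = (\<Sum>m<2*L'. f m a b)" by (rule sum_pairs[symmetric])
  also have "\<dots> \<le> (\<Sum>m\<le>n. f m a b)" using assms(2) by (intro sum_mono2) (auto simp: f_nonneg)
  finally show ?thesis .
qed

lemma hitp_nonneg: "hitp A n x \<ge> 0"
proof (induction n arbitrary: x)
  case 0 then show ?case by simp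
next
  case (Suc n)
  have "(\<Sum>e\<in>srw_steps. hitp A n (padd x e)) \<ge> 0" by (intro sum_nonneg Suc.IH)
  then show ?case by simp
qed

lemma hitp_reach: "hitp A n x > 0 \<Longrightarrow> \<exists>y\<in>A. \<bar>fst y - fst x\<bar> + \<bar>snd y - snd x\<bar> \<le> int n"
proof (induction n arbitrary: x)
  case 0
  hence "x \<in> A" by (simp split: if_splits)
  then show ?case by (intro bexI[of _ x]) auto
next
  case (Suc n)
  show ?case
  proof (cases "x \<in> A")
    case True then show ?thesis by (intro bexI[of _ x]) auto
  next
    case False
    have "(\<Sum>e\<in>srw_steps. hitp A n (padd x e)) > 0" using Suc.prems False by simp
    then obtain e where e: "e \<in> srw_steps" "hitp A n (padd x e) > 0"
      by (metis (no_types, lifting) less_le_not_le sum_nonpos hitp_nonneg order_le_less)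
    from Suc.IH[OF e(2)] obtain y where y: "y \<in> A" "\<bar>fst y - fst (padd x e)\<bar> + \<bar>snd y - snd (padd x e)\<bar> \<le> int n" by blast
    have "\<bar>fst e\<bar> + \<bar>snd e\<bar> = 1" using e(1) by (auto simp: srw_steps_def)
    hence "\<bar>fst y - fst x\<bar> + \<bar>snd y - snd x\<bar> \<le> int (Suc n)" using y(2) by (simp add: padd_def)
    thus ?thesis using y(1) by blast
  qed
qed



lemma vis_lower: assumes "y \<in> square z k"
  shows "visf (square z k) n y \<ge> real (card (square z k)) * (\<Sum>l\<in>{32*k^2..<(n+1) div 2}. 1 / (16 * (real l + 1)))"
proof -
  define Q where "Q = square z k"
  define H where "H = (\<Sum>l\<in>{32*k^2..<(n+1) div 2}. 1 / (16 * (real l + 1)))"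
  have pt: "H \<le> (\<Sum>m\<le>n. f m (fst y' - fst y) (snd y' - snd y))" if y': "y' \<in> Q" for y'
  proof -
    define a where "a = fst y' - fst y"
    define b where "b = snd y' - snd y"
    have ab: "\<bar>a\<bar> \<le> 2 * int k" "\<bar>b\<bar> \<le> 2 * int k"
      using assms y' unfolding Q_def square_mem a_def b_def by linarith+
    have "a ^ 2 \<le> (2 * int k) ^ 2" using abs_le_square_iff[of a "2 * int k"] ab(1) by simp
    moreover have "b ^ 2 \<le> (2 * int k) ^ 2" using abs_le_square_iff[of b "2 * int k"] ab(2) by simp
    ultimately have "8 * (a ^ 2 + b ^ 2) \<le> 2 * int (32 * k ^ 2)" by (simp add: power2_eq_square)
    moreover have "2 * ((n + 1) div 2) \<le> n + 1" by simp
    ultimately show ?thesis unfolding H_def a_def[symmetric] b_def[symmetric] by (rule point_lower)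
  qed
  have "visf Q n y = (\<Sum>y'\<in>Q. \<Sum>m\<le>n. f m (fst y' - fst y) (snd y' - snd y))"
    unfolding visf_def by (rule sum.swap)
  also have "\<dots> \<ge> (\<Sum>y'\<in>Q. H)" by (intro sum_mono pt)
  finally show ?thesis by (simp add: Q_def H_def)
qed

lemma frac_le_helper: "0 < b \<Longrightarrow> 0 < d \<Longrightarrow> a * d \<le> c * b \<Longrightarrow> a / b \<le> c / (d::real)"
  by (simp add: divide_simps)

lemma gauss_term:
  fixes Y2 Z :: real
  assumes n1: "n \<ge> 1" and m: "m \<le> 2 * n" and Y: "Y2 \<ge> 49/100 * Z ^ 2" and Zn: "Z ^ 2 \<ge> 25 * real n"
  shows "4 / (real m + 1) * exp (- Y2 / (4 * (real m + 1))) \<le> 4 / real n * exp (- (Z ^ 2) / (72 * real n))"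
proof -
  define M where "M = real m + 1"
  define N where "N = real n"
  have M0: "M > 0" and N1: "N \<ge> 1" and MN: "M \<le> 3 * N" using n1 m by (simp_all add: M_def N_def)
  have Z2: "Z ^ 2 \<ge> 0" by simp
  have Y0: "Y2 \<ge> 0" using Y Z2 by linarith
  have YN: "Y2 * N \<ge> 0" using Y0 N1 by simp
  have h1: "Z ^ 2 / (72 * N) \<le> Y2 / (8 * M)"
  proof -
    have "Z ^ 2 * (8 * M) \<le> Z ^ 2 * (24 * N)" using MN Z2 by (intro mult_left_mono) auto
    also have "\<dots> \<le> (100 / 49 * Y2) * (24 * N)" using Y N1 by (intro mult_right_mono) auto
    also have "(100 / 49 * Y2) * (24 * N) = (2400/49) * (Y2 * N)" by simp
    also have "\<dots> \<le> 72 * (Y2 * N)" using YN by (intro mult_right_mono) auto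
    also have "\<dots> = Y2 * (72 * N)" by simp
    finally show ?thesis using M0 N1 by (intro frac_le_helper) auto
  qed
  have h2: "N / M \<le> Y2 / (8 * M)"
  proof -
    have "8 * N \<le> Y2" using Y Zn by (simp add: N_def)
    hence "N * (8 * M) \<le> Y2 * M" using M0 by simp
    thus ?thesis using M0 by (intro frac_le_helper) auto
  qed
  have e1: "exp (- Y2 / (4 * M)) = exp (- (Y2 / (8 * M))) * exp (- (Y2 / (8 * M)))"
  proof -
    have "\<And>M. M > 0 \<Longrightarrow> - Y2 / (4 * M) = - (Y2 / (8 * M)) + - (Y2 / (8 * M))"
      by (simp add: field_simps)
    hence "- Y2 / (4 * M) = - (Y2 / (8 * M)) + - (Y2 / (8 * M))" using M0 by blast
    thus ?thesis by (simp only: exp_add)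
  qed
  have e2: "exp (- (Y2 / (8 * M))) \<le> exp (- (Z ^ 2 / (72 * N)))" using h1 by simp
  have e3: "exp (- (Y2 / (8 * M))) \<le> exp (- (N / M))" using h2 by simp
  have e4: "exp (- (N / M)) \<le> M / N"
  proof -
    have "N / M \<le> exp (N / M)" using exp_ge_add_one_self[of "N / M"] by linarith
    hence "1 / exp (N / M) \<le> 1 / (N / M)" using N1 M0 by (intro divide_left_mono) auto
    thus ?thesis by (simp add: exp_minus inverse_eq_divide)
  qed
  have e34: "exp (- (Y2 / (8 * M))) \<le> M / N" using e3 e4 by (rule order_trans)
  have "exp (- (Y2 / (8 * M))) * exp (- (Y2 / (8 * M))) \<le> exp (- (Z ^ 2 / (72 * N))) * (M / N)"
    using e2 e34 by (rule mult_mono) auto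
  hence "4 / M * exp (- Y2 / (4 * M)) \<le> 4 / M * (exp (- (Z ^ 2 / (72 * N))) * (M / N))"
    unfolding e1 using M0 by (intro mult_left_mono) auto
  also have "\<dots> = 4 / N * exp (- (Z ^ 2 / (72 * N)))" using M0 by simp
  finally show ?thesis by (simp add: M_def N_def)
qed

lemma square_far:
  assumes y: "y \<in> square z k" and kn: "real k ^ 2 \<le> real n" and Z: "znorm z \<ge> 5 * sqrt (real n)"
  shows "real_of_int (fst y) ^ 2 + real_of_int (snd y) ^ 2 \<ge> 49/100 * znorm z ^ 2" "znorm z ^ 2 \<ge> 25 * real n"
proof -
  define Zv where "Zv = znorm z"
  have sq0: "sqrt (real n) \<ge> 0" by simp
  have Z0: "Zv \<ge> 0" using Z sq0 unfolding Zv_def by linarith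
  have Zn: "Zv ^ 2 \<ge> 25 * real n"
  proof -
    have "(5 * sqrt (real n)) ^ 2 \<le> Zv ^ 2" using Z sq0 unfolding Zv_def by (intro power_mono) auto
    thus ?thesis by (simp add: power_mult_distrib)
  qed
  thus "znorm z ^ 2 \<ge> 25 * real n" by (simp add: Zv_def)
  define j where "j = real_of_int (fst z - fst y)"
  define j' where "j' = real_of_int (snd z - snd y)"
  have i1: "\<bar>fst z - fst y\<bar> \<le> int k" "\<bar>snd z - snd y\<bar> \<le> int k"
    using y unfolding square_mem by (simp_all add: abs_minus_commute)
  have "real_of_int \<bar>fst z - fst y\<bar> \<le> real_of_int (int k)" using i1(1) by (simp only: of_int_le_iff)
  hence j1: "\<bar>j\<bar> \<le> real k" by (simp add: j_def)
  have "real_of_int \<bar>snd z - snd y\<bar> \<le> real_of_int (int k)" using i1(2) by (simp only: of_int_le_iff)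
  hence j2: "\<bar>j'\<bar> \<le> real k" by (simp add: j'_def)
  define D where "D = sqrt (j ^ 2 + j' ^ 2)"
  define Y where "Y = sqrt (real_of_int (fst y) ^ 2 + real_of_int (snd y) ^ 2)"
  have "Zv = sqrt ((real_of_int (fst y) + j) ^ 2 + (real_of_int (snd y) + j') ^ 2)"
    by (simp add: Zv_def znorm_def j_def j'_def)
  also have "\<dots> \<le> Y + D" unfolding Y_def D_def by (rule real_sqrt_sum_squares_triangle_ineq)
  finally have ZYD: "Zv \<le> Y + D" .
  have "j ^ 2 \<le> real k ^ 2" using abs_le_square_iff[of j "real k"] j1 by simp
  moreover have "j' ^ 2 \<le> real k ^ 2" using abs_le_square_iff[of j' "real k"] j2 by simp
  ultimately have "j ^ 2 + j' ^ 2 \<le> 9/100 * Zv ^ 2" using kn Zn by linarith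
  also have "\<dots> = (3/10 * Zv) ^ 2" by (simp add: power2_eq_square)
  finally have "D \<le> sqrt ((3/10 * Zv) ^ 2)" unfolding D_def by (rule real_sqrt_le_mono)
  also have "\<dots> = 3/10 * Zv" using Z0 by simp
  finally have "D \<le> 3/10 * Zv" .
  hence "7/10 * Zv \<le> Y" using ZYD by simp
  hence "(7/10 * Zv) ^ 2 \<le> Y ^ 2" using Z0 by (intro power_mono) auto
  moreover have "Y ^ 2 = real_of_int (fst y) ^ 2 + real_of_int (snd y) ^ 2" unfolding Y_def by simp
  moreover have "(7/10 * Zv) ^ 2 = 49/100 * znorm z ^ 2" by (simp add: Zv_def power2_eq_square)
  ultimately show "real_of_int (fst y) ^ 2 + real_of_int (snd y) ^ 2 \<ge> 49/100 * znorm z ^ 2"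
    by linarith
qed

lemma vis_upper:
  assumes n1: "n \<ge> 1" and kn: "real k ^ 2 \<le> real n" and Z: "znorm z \<ge> 5 * sqrt (real n)"
  shows "visf (square z k) (n + n) (0, 0) \<le> real (card (square z k)) * (12 * exp (- (znorm z ^ 2) / (72 * real n)))"
proof -
  define Q where "Q = square z k"
  define E where "E = exp (- (znorm z ^ 2) / (72 * real n))"
  have t: "f m (fst y) (snd y) \<le> 4 / real n * E" if "y \<in> Q" "m \<le> 2 * n" for y m
  proof -
    have "f m (fst y) (snd y) \<le> 4 / (real m + 1) * exp (- (real_of_int (fst y) ^ 2 + real_of_int (snd y) ^ 2) / (4 * (real m + 1)))"
      by (rule f_gauss)
    also have "\<dots> \<le> 4 / real n * E"
      unfolding E_def using square_far[OF _ kn Z, of y] that n1 unfolding Q_def by (intro gauss_term) auto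
    finally show ?thesis .
  qed
  have "visf Q (n + n) (0, 0) = (\<Sum>m\<le>2*n. \<Sum>y\<in>Q. f m (fst y) (snd y))"
    unfolding visf_def by (simp add: mult_2)
  also have "\<dots> \<le> (\<Sum>m\<le>2*n. \<Sum>y\<in>Q. 4 / real n * E)" by (intro sum_mono t) auto
  also have "\<dots> = (2 * real n + 1) * real (card Q) * (4 / real n * E)" by simp
  also have "\<dots> \<le> real (card Q) * (12 * E)"
  proof -
    have "(2 * real n + 1) * (4 / real n) \<le> 12" using n1 by (simp add: divide_simps)
    hence le: "(2 * real n + 1) * (4 / real n) * (real (card Q) * E) \<le> 12 * (real (card Q) * E)"
      by (intro mult_right_mono) (auto simp: E_def)
    have "(2 * real n + 1) * real (card Q) * (4 / real n * E) = (2 * real n + 1) * (4 / real n) * (real (card Q) * E)"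
      by (simp only: mult_ac)
    also have "\<dots> \<le> 12 * (real (card Q) * E)" by (rule le)
    also have "\<dots> = real (card Q) * (12 * E)" by (simp only: mult_ac)
    finally show ?thesis .
  qed
  finally show ?thesis by (simp add: Q_def E_def)
qed



lemma ln2_ge: "ln (2::real) \<ge> 1/2"
proof -
  have e: "exp (ln (2::real)) = 2" by simp
  have "exp (1/2) \<le> exp (ln (2::real))" by (simp only: e exp_half_le2)
  thus ?thesis by (simp only: exp_le_cancel_iff)
qed

lemma log2_le: assumes "n \<ge> 1" shows "log 2 (real n) \<le> 2 * real n"
proof -
  have "ln (real n) \<le> real n - 1" using assms by (intro ln_le_minus_one) auto
  moreover have "ln (real n) \<ge> 0" using assms by simp
  moreover have "log 2 (real n) = ln (real n) / ln 2" by (simp add: log_def)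
  ultimately have "log 2 (real n) \<le> (real n - 1) / ln 2" using ln2_ge
    by (simp add: divide_right_mono)
  also have "\<dots> \<le> (real n - 1) / (1/2)" using ln2_ge assms by (intro divide_left_mono) auto
  finally show ?thesis by simp
qed

lemma ln_H: assumes n: "real n \<ge> 66 ^ 4" and ks: "real k ^ 2 \<le> sqrt (real n)"
  shows "ln (real ((n + 1) div 2) + 1) - ln (real (32 * k ^ 2) + 1) \<ge> ln (real n) / 4"
proof -
  have n1: "real n \<ge> 1" using n by simp
  have s1: "sqrt (real n) \<ge> 1" using n1 by simp
  have "2 * ((n + 1) div 2) \<ge> n" by simp
  hence "real (2 * ((n + 1) div 2)) \<ge> real n" by (simp only: of_nat_le_iff)
  hence a: "real ((n + 1) div 2) + 1 \<ge> real n / 2" by simp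
  have "real (32 * k ^ 2) = 32 * real k ^ 2" by simp
  hence b: "real (32 * k ^ 2) + 1 \<le> 33 * sqrt (real n)" using ks s1 by linarith
  have "ln (real n / 2) \<le> ln (real ((n + 1) div 2) + 1)" using a n1 by simp
  moreover have "ln (real n / 2) = ln (real n) - ln 2" using n1 by (simp add: ln_div)
  moreover have "ln (real (32 * k ^ 2) + 1) \<le> ln (33 * sqrt (real n))"
  proof -
    have p1: "real (32 * k ^ 2) + 1 > 0" by (intro add_nonneg_pos) auto
    have p2: "33 * sqrt (real n) > 0" using s1 by simp
    show ?thesis using b ln_le_cancel_iff[OF p1 p2] by blast
  qed
  moreover have "ln (33 * sqrt (real n)) = ln 33 + ln (real n) / 2" using n1 by (simp add: ln_mult ln_sqrt)
  moreover have "ln (66::real) = ln 2 + ln 33" using ln_mult_pos[of 2 33] by simp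
  moreover have "ln (real n) \<ge> 4 * ln 66"
  proof -
    have a: "ln ((66::real) ^ 4) \<le> ln (real n)" using n by simp
    have h: "ln ((66::real) ^ 4) = 4 * ln 66" by (simp only: ln_realpow of_nat_numeral)
    from a h show ?thesis by linarith
  qed
  ultimately show ?thesis by linarith
qed

theorem mainTheorem10:
  shows "\<exists>c C :: real. c > 0 \<and> C > 0 \<and>
    (\<forall>(n::nat) (k::nat) (z::int \<times> int).
       n \<ge> 2 \<longrightarrow> real k \<le> root 4 (real n) \<longrightarrow> znorm z \<ge> 5 * sqrt (real n) \<longrightarrow>
       measure_pmf.prob (srw_law n) {xs. walk_range xs n \<inter> square z k \<noteq> {}}
         \<le> C / log 2 (real n) * exp (- c * znorm z ^ 2 / real n))"
proof -
  define N0 :: real where "N0 = 66 ^ 4"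
  define C :: real where "C = 2 * N0 * exp N0"
  have N0: "N0 \<ge> 768" by (simp add: N0_def)
  have C0: "C > 0" by (simp add: C_def N0_def)
  have main: "measure_pmf.prob (srw_law n) {xs. walk_range xs n \<inter> square z k \<noteq> {}}
         \<le> C / log 2 (real n) * exp (- (1/72) * znorm z ^ 2 / real n)"
    if n2: "n \<ge> 2" and kr: "real k \<le> root 4 (real n)" and Z: "znorm z \<ge> 5 * sqrt (real n)" for n k z
  proof -
    define Q where "Q = square z k"
    define P where "P = hitp Q n (0, 0)"
    define E where "E = exp (- (znorm z ^ 2) / (72 * real n))"
    have E0: "E > 0" by (simp add: E_def)
    have n1: "n \<ge> 1" and rn1: "real n \<ge> 1" using n2 by auto
    have Eeq: "exp (- (1/72) * znorm z ^ 2 / real n) = E" by (simp add: E_def)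
    have prob: "measure_pmf.prob (srw_law n) {xs. walk_range xs n \<inter> square z k \<noteq> {}} = P"
      unfolding P_def Q_def by (rule prob_hit)
    have lg0: "log 2 (real n) > 0" using n2 by simp
    have k4: "real k ^ 4 \<le> real n"
    proof -
      have "real k ^ 4 \<le> root 4 (real n) ^ 4" using kr by (intro power_mono) auto
      thus ?thesis by simp
    qed
    have ks: "real k ^ 2 \<le> sqrt (real n)"
      by (rule real_le_rsqrt) (use k4 in \<open>simp add: power_mult[symmetric]\<close>)
    have sqn: "sqrt (real n) \<le> real n"
    proof -
      have "sqrt (real n) \<ge> 1" using rn1 by simp
      hence "sqrt (real n) * 1 \<le> sqrt (real n) * sqrt (real n)" by (intro mult_left_mono) auto
      thus ?thesis by simp
    qed
    have kn: "real k ^ 2 \<le> real n" using ks sqn by linarith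
    show ?thesis
    proof (cases "real n \<ge> N0")
      case True
      define H where "H = (\<Sum>l\<in>{32*k^2..<(n+1) div 2}. 1 / (16 * (real l + 1)))"
      have H0: "H \<ge> 0" unfolding H_def by (intro sum_nonneg) auto
      have H1: "H \<ge> ln (real n) / 64"
      proof -
        have "H = (\<Sum>l\<in>{32*k^2..<(n+1) div 2}. 1 / (real l + 1)) / 16"
          unfolding H_def sum_divide_distrib by (intro sum.cong) auto
        also have "\<dots> \<ge> (ln (real ((n + 1) div 2) + 1) - ln (real (32 * k ^ 2) + 1)) / 16"
          by (intro divide_right_mono harmonic_ln) auto
        finally have "H \<ge> (ln (real ((n + 1) div 2) + 1) - ln (real (32 * k ^ 2) + 1)) / 16" .
        moreover have "ln (real ((n + 1) div 2) + 1) - ln (real (32 * k ^ 2) + 1) \<ge> ln (real n) / 4"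
          using True ks unfolding N0_def by (intro ln_H) auto
        hence "(ln (real n) / 4) / 16 \<le> (ln (real ((n + 1) div 2) + 1) - ln (real (32 * k ^ 2) + 1)) / 16"
          by (rule divide_right_mono) simp
        ultimately show ?thesis by simp
      qed
      have cq: "real (card Q) > 0" using card_square_pos unfolding Q_def by simp
      have "P * (real (card Q) * H) \<le> visf Q (n + n) (0, 0)"
        unfolding P_def
      proof (rule hit_vis)
        show "finite Q" unfolding Q_def by (rule finite_square)
        show "0 \<le> real (card Q) * H" using H0 by simp
        show "\<forall>y\<in>Q. real (card Q) * H \<le> visf Q n y" using vis_lower unfolding Q_def H_def by blast
      qed
      also have "\<dots> \<le> real (card Q) * (12 * E)"
        unfolding Q_def E_def using n1 kn Z by (rule vis_upper)
      finally have "real (card Q) * (P * H) \<le> real (card Q) * (12 * E)" by (simp add: mult_ac)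
      hence PH: "P * H \<le> 12 * E" using cq by simp
      have lnn: "ln (real n) > 0" using n2 by simp
      have P0: "P \<ge> 0" unfolding P_def by (rule hitp_nonneg)
      have "P * (ln (real n) / 64) \<le> P * H" using H1 P0 by (rule mult_left_mono)
      hence "P * ln (real n) \<le> 768 * E" using PH by linarith
      hence P1: "P \<le> 768 * E / ln (real n)" using lnn by (simp add: divide_simps mult.commute)
      have "ln (real n) = log 2 (real n) * ln 2" by (simp add: log_def)
      moreover have "log 2 (real n) * (1/2) \<le> log 2 (real n) * ln 2" using ln2_ge lg0 by (intro mult_left_mono) auto
      ultimately have "ln (real n) \<ge> log 2 (real n) / 2" by linarith
      hence "768 * E / ln (real n) \<le> 768 * E / (log 2 (real n) / 2)"
        using lg0 E0 by (intro divide_left_mono) auto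
      also have "\<dots> = 1536 * E / log 2 (real n)" by simp
      also have "\<dots> \<le> C * E / log 2 (real n)"
      proof -
        have "1536 \<le> C" unfolding C_def using N0 by (smt (verit) exp_ge_one_plus_x_over_n_power_n one_le_exp_iff
              mult_le_cancel_left1 N0_def)
        thus ?thesis using E0 lg0 by (intro divide_right_mono mult_right_mono) auto
      qed
      finally show ?thesis unfolding prob Eeq using P1 by simp
    next
      case False
      show ?thesis
      proof (cases "P > 0")
        case False
        hence "P = 0" using hitp_nonneg[of Q n "(0,0)"] unfolding P_def by linarith
        then show ?thesis unfolding prob Eeq using C0 E0 lg0 by simp
      next
        case True
        then obtain y where y: "y \<in> Q" "\<bar>fst y - 0\<bar> + \<bar>snd y - 0\<bar> \<le> int n"
          using hitp_reach[of Q n "(0,0)"] unfolding P_def by auto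
        have yz: "\<bar>fst y - fst z\<bar> \<le> int k" "\<bar>snd y - snd z\<bar> \<le> int k"
          using y(1) unfolding Q_def square_mem by auto
        have kk: "real k \<le> real n"
        proof (cases "k = 0")
          case True then show ?thesis by simp
        next
          case False
          hence "real k \<le> real k ^ 2" by (simp add: power2_eq_square)
          thus ?thesis using kn by linarith
        qed
        hence kk': "k \<le> n" by simp
        have "\<bar>fst z\<bar> + \<bar>snd z\<bar> \<le> 3 * int n" using y(2) yz kk' by linarith
        hence "real_of_int (\<bar>fst z\<bar> + \<bar>snd z\<bar>) \<le> real_of_int (3 * int n)" by (simp only: of_int_le_iff)
        hence s3: "\<bar>real_of_int (fst z)\<bar> + \<bar>real_of_int (snd z)\<bar> \<le> 3 * real n" by simp
        have "znorm z \<le> \<bar>real_of_int (fst z)\<bar> + \<bar>real_of_int (snd z)\<bar>"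
          unfolding znorm_def by (rule sqrt_sum_squares_le_sum_abs)
        hence Zb: "znorm z \<le> 3 * real n" using s3 by linarith
        have Zp: "znorm z \<ge> 0" unfolding znorm_def by simp
        have "znorm z ^ 2 \<le> (3 * real n) ^ 2" using Zb Zp by (intro power_mono) auto
        hence "znorm z ^ 2 / (72 * real n) \<le> (3 * real n) ^ 2 / (72 * real n)"
          using rn1 by (intro divide_right_mono) auto
        also have "\<dots> = real n / 8" using rn1 by (simp add: power2_eq_square)
        also have "\<dots> \<le> N0" using False by simp
        finally have "E \<ge> exp (- N0)" unfolding E_def by simp
        hence "C * E \<ge> C * exp (- N0)" using C0 by (intro mult_left_mono) auto
        moreover have "C * exp (- N0) = 2 * N0" by (simp add: C_def exp_minus field_simps)
        moreover have "log 2 (real n) \<le> 2 * N0" using log2_le[OF n1] False by linarith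
        ultimately have "log 2 (real n) \<le> C * E" by linarith
        hence "1 \<le> C * E / log 2 (real n)" using lg0 by (simp add: divide_simps)
        moreover have "P \<le> 1"
          using measure_pmf.prob_le_1 prob by metis
        ultimately show ?thesis unfolding prob Eeq by simp
      qed
    qed
  qed
  show ?thesis
    by (rule exI[of _ "1/72"], rule exI[of _ C]) (use C0 main in auto)
qed


end
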